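(* Let \(k\ge0\), \(\lambda=(\lambda_1\ge\dots\ge\lambda_k\ge0)\), and let \(J=(j_0<\dots<j_{r-1})\) be a strictly increasing sequence of non-negative integers of length \(r\ge k\) with \(J\succeq_k\lambda\). Then \(N_k(J)\ge|\lambda|\), with equality if and only if \(r=k\) and \(J=J^{(k)}_\lambda\).
   Context: \(|\lambda|=\lambda_1+\dots+\lambda_k\). \(J\succeq_k\lambda\) means \(j_{r-i}\ge\lambda_i+k-i\) for \(i=1,\dots,k\). \(J^{(k)}_\lambda=(\lambda_k,\lambda_{k-1}+1,\dots,\lambda_1+k-1)\). \(N_k(J)=r(r-k)+\sum_{q=0}^{r-1}(j_q-q)\). *)

theory Defs
  imports Main
begin

text \<open>A partition \<lambda> = (\<lambda>_1 \<ge> ... \<ge> \<lambda>_k \<ge> 0) is a function lam :: nat \<Rightarrow> nat,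
  only the values lam 1, ..., lam k being relevant.  A sequence J = (j_0 < ... < j_{r-1})
  is a function J :: nat \<Rightarrow> nat, only J 0, ..., J (r-1) being relevant.\<close>

definition is_partition :: "nat \<Rightarrow> (nat \<Rightarrow> nat) \<Rightarrow> bool" where
  "is_partition k lam \<longleftrightarrow> (\<forall>i j. 1 \<le> i \<longrightarrow> i \<le> j \<longrightarrow> j \<le> k \<longrightarrow> lam j \<le> lam i)"

definition part_size :: "nat \<Rightarrow> (nat \<Rightarrow> nat) \<Rightarrow> nat" where
  "part_size k lam = (\<Sum>i=1..k. lam i)"

definition strictly_incr :: "nat \<Rightarrow> (nat \<Rightarrow> nat) \<Rightarrow> bool" where
  "strictly_incr r J \<longleftrightarrow> (\<forall>p q. p < q \<longrightarrow> q < r \<longrightarrow> J p < J q)"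

definition dominates :: "nat \<Rightarrow> nat \<Rightarrow> (nat \<Rightarrow> nat) \<Rightarrow> (nat \<Rightarrow> nat) \<Rightarrow> bool" where
  "dominates k r J lam \<longleftrightarrow> (\<forall>i\<in>{1..k}. int (J (r - i)) \<ge> int (lam i) + int k - int i)"

definition Nk :: "nat \<Rightarrow> nat \<Rightarrow> (nat \<Rightarrow> nat) \<Rightarrow> int" where
  "Nk k r J = int r * (int r - int k) + (\<Sum>q<r. int (J q) - int q)"

definition Jk :: "nat \<Rightarrow> (nat \<Rightarrow> nat) \<Rightarrow> nat \<Rightarrow> nat" where
  "Jk k lam q = lam (k - q) + q"

end

theory Submission
  imports Defs
begin

lemma J_ge: assumes "strictly_incr r J" shows "q < r \<Longrightarrow> q \<le> J q"
proof (induction q)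
  case 0 then show ?case by simp
next
  case (Suc q)
  then have "J q < J (Suc q)" using assms unfolding strictly_incr_def by auto
  with Suc show ?case by auto
qed

lemma reidx:
  fixes k r :: nat and f :: "nat \<Rightarrow> int"
  assumes "k \<le> r"
  shows "(\<Sum>q\<in>{r-k..<r}. f (r - q)) = (\<Sum>i=1..k. f i)"
  apply (rule sum.reindex_bij_witness[where i="\<lambda>q. r - q" and j="\<lambda>i. r - i"])
  using assms by auto

theorem lemma4p15:
  fixes k r :: nat and lam J :: "nat \<Rightarrow> nat"
  assumes "is_partition k lam"
    and "strictly_incr r J"
    and "k \<le> r"
    and "dominates k r J lam"
  shows "Nk k r J \<ge> int (part_size k lam) \<and>
    (Nk k r J = int (part_size k lam) \<longleftrightarrow> (r = k \<and> (\<forall>q<k. J q = Jk k lam q)))"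
proof -
  define d where "d q = int (J q) - int q" for q
  define b where "b q = (if q < r - k then 0 else int (lam (r - q)) + int k - int r)" for q
  have db: "b q \<le> d q" if "q < r" for q
  proof (cases "q < r - k")
    case True then show ?thesis using J_ge[OF assms(2) that] by (simp add: b_def d_def)
  next
    case False
    define i where "i = r - q"
    have i: "i \<in> {1..k}" "q = r - i" using False that assms(3) by (auto simp: i_def)
    then have "int (J (r - i)) \<ge> int (lam i) + int k - int i" using assms(4) by (auto simp: dominates_def)
    moreover have "r - q = i" using False that by (simp add: i_def)
    moreover have "int q = int r - int i" using i that assms(3) by (simp add: of_nat_diff)
    moreover have "J (r - i) = J q" using i by simp
    ultimately show ?thesis using False by (simp add: b_def d_def)
  qed
  have split: "{..<r} = {..<r-k} \<union> {r-k..<r}" by auto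
  have sb: "(\<Sum>q<r. b q) = int (part_size k lam) + int k * (int k - int r)"
  proof -
    have "(\<Sum>q<r. b q) = (\<Sum>q<r-k. b q) + (\<Sum>q\<in>{r-k..<r}. b q)"
      by (subst split, rule sum.union_disjoint) auto
    also have "(\<Sum>q<r-k. b q) = 0" by (simp add: b_def)
    also have "(\<Sum>q\<in>{r-k..<r}. b q) = (\<Sum>q\<in>{r-k..<r}. int (lam (r - q)) + int k - int r)"
      by (rule sum.cong) (auto simp: b_def)
    also have "\<dots> = (\<Sum>i=1..k. int (lam i) + int k - int r)"
      using reidx[OF assms(3), of "\<lambda>i. int (lam i) + int k - int r"] by simp
    also have "\<dots> = int (part_size k lam) + int k * (int k - int r)"
      by (simp add: sum.distrib sum_subtractf part_size_def algebra_simps)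
    finally show ?thesis by simp
  qed
  have N: "Nk k r J = int r * (int r - int k) + (\<Sum>q<r. d q)" by (simp add: Nk_def d_def)
  have sle: "(\<Sum>q<r. b q) \<le> (\<Sum>q<r. d q)" by (rule sum_mono) (use db in auto)
  have sq: "int r * (int r - int k) + int k * (int k - int r) = (int r - int k)^2"
    by (simp add: power2_eq_square algebra_simps)
  have ge: "Nk k r J \<ge> int (part_size k lam) + (int r - int k)^2"
    using N sle sb sq by linarith
  have eq: "Nk k r J = int (part_size k lam) \<longleftrightarrow> (r = k \<and> (\<forall>q<k. J q = Jk k lam q))"
  proof
    assume e: "Nk k r J = int (part_size k lam)"
    have "(int r - int k)^2 = 0" using ge e by (smt (verit) zero_le_power2)
    then have rk: "r = k" by simp
    have "(\<Sum>q<r. d q) = (\<Sum>q<r. b q)" using e N sb rk by simp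
    then have "(\<Sum>q<r. d q - b q) = 0" by (simp add: sum_subtractf)
    then have z: "\<forall>q\<in>{..<r}. d q - b q = 0"
      by (subst sum_nonneg_eq_0_iff[symmetric]) (use db in auto)
    have "\<forall>q<k. J q = Jk k lam q"
    proof (intro allI impI)
      fix q assume "q < k"
      then have "d q = b q" using z rk by auto
      then show "J q = Jk k lam q" using rk \<open>q < k\<close> by (simp add: d_def b_def Jk_def)
    qed
    with rk show "r = k \<and> (\<forall>q<k. J q = Jk k lam q)" by simp
  next
    assume h: "r = k \<and> (\<forall>q<k. J q = Jk k lam q)"
    then have "\<forall>q<r. d q = b q" by (auto simp: d_def b_def Jk_def)
    then have "(\<Sum>q<r. d q) = (\<Sum>q<r. b q)" by simp
    then show "Nk k r J = int (part_size k lam)" using N sb h by simp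
  qed
  show ?thesis using ge eq by (smt (verit) zero_le_power2)
qed

end
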